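(* Let $\|\cdot\|$ be a norm on $\mathbb{R}^n$ which is $C^1$ (away from the origin) and strictly convex, and let $\mathsf{d}(x,y)=\|x-y\|$. Then $(\mathbb{R}^n,\mathsf{d})$ is locally-uniformly non-branching.
   Context: $\mathrm{Geo}(\mathsf{X},\mathsf{d})$ is the set of constant-speed length-minimising curves $\gamma:[0,1]\to\mathsf{X}$. A metric space $(\mathsf{X},\mathsf{d})$ is locally-uniformly non-branching if it is Polish and for every $x,y,z\in\mathsf{X}$ with $y\ne z$ and $\mathsf{d}(x,y)=\mathsf{d}(x,z)$ there exist $r>0$ and $\rho>0$ such that for all $x'\in B_r(x)$, $y'\in B_r(y)$, $z'\in B_r(z)$ there is $\gamma\in\mathrm{Geo}(\mathsf{X},\mathsf{d})$ with $\gamma(0)=x'$, $\gamma(1)=y'$ and $\liminf_{t\downarrow0}\frac{\mathsf{d}(\gamma(t),z')-\mathsf{d}(x',z')}{t}\ge-(1-\rho)\,\mathsf{d}(x',y')$. *)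

theory Defs
  imports "HOL-Analysis.Analysis"
begin

definition polish_metric :: "'a set \<Rightarrow> ('a \<Rightarrow> 'a \<Rightarrow> real) \<Rightarrow> bool" where
  "polish_metric X d \<longleftrightarrow> Metric_space X d \<and> Metric_space.mcomplete X d
     \<and> separable_space (Metric_space.mtopology X d)"

definition Geo :: "'a set \<Rightarrow> ('a \<Rightarrow> 'a \<Rightarrow> real) \<Rightarrow> (real \<Rightarrow> 'a) set" where
  "Geo X d = {\<gamma>. (\<forall>t\<in>{0..1}. \<gamma> t \<in> X) \<and>
     (\<forall>s\<in>{0..1}. \<forall>t\<in>{0..1}. d (\<gamma> s) (\<gamma> t) = \<bar>t - s\<bar> * d (\<gamma> 0) (\<gamma> 1))}"

definition open_mball :: "'a set \<Rightarrow> ('a \<Rightarrow> 'a \<Rightarrow> real) \<Rightarrow> 'a \<Rightarrow> real \<Rightarrow> 'a set" where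
  "open_mball X d x r = {y\<in>X. d x y < r}"

definition locally_uniformly_non_branching :: "'a set \<Rightarrow> ('a \<Rightarrow> 'a \<Rightarrow> real) \<Rightarrow> bool" where
  "locally_uniformly_non_branching X d \<longleftrightarrow> polish_metric X d \<and>
    (\<forall>x\<in>X. \<forall>y\<in>X. \<forall>z\<in>X. y \<noteq> z \<and> d x y = d x z \<longrightarrow>
      (\<exists>r>0. \<exists>\<rho>>0. \<forall>x'\<in>open_mball X d x r. \<forall>y'\<in>open_mball X d y r. \<forall>z'\<in>open_mball X d z r.
         (\<exists>\<gamma>\<in>Geo X d. \<gamma> 0 = x' \<and> \<gamma> 1 = y' \<and>
            Liminf (at_right 0) (\<lambda>t. ereal ((d (\<gamma> t) z' - d x' z') / t))
              \<ge> ereal (- (1 - \<rho>) * d x' y'))))"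

definition is_norm :: "('a::real_vector \<Rightarrow> real) \<Rightarrow> bool" where
  "is_norm N \<longleftrightarrow> (\<forall>x. N x \<ge> 0) \<and> (\<forall>x. N x = 0 \<longleftrightarrow> x = 0) \<and>
     (\<forall>c x. N (c *\<^sub>R x) = \<bar>c\<bar> * N x) \<and> (\<forall>x y. N (x + y) \<le> N x + N y)"

definition strictly_convex_norm :: "('a::real_vector \<Rightarrow> real) \<Rightarrow> bool" where
  "strictly_convex_norm N \<longleftrightarrow> (\<forall>x y t. N x = 1 \<and> N y = 1 \<and> x \<noteq> y \<and> 0 < t \<and> t < 1
      \<longrightarrow> N ((1 - t) *\<^sub>R x + t *\<^sub>R y) < 1)"

definition C1_away_from_origin :: "(real^'n \<Rightarrow> real) \<Rightarrow> bool" where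
  "C1_away_from_origin N \<longleftrightarrow> (\<exists>D :: real^'n \<Rightarrow> real^'n.
      (\<forall>x. x \<noteq> 0 \<longrightarrow> (N has_derivative (\<lambda>h. D x \<bullet> h)) (at x))
      \<and> continuous_on (UNIV - {0}) D)"

end

theory Submission
  imports Defs
begin

lemma nrm_basic:
  fixes N :: "'a::real_normed_vector \<Rightarrow> real"
  assumes "is_norm N"
  shows "N (- x) = N x" "N (x - y) = N (y - x)" "N 0 = 0"
    "N (c *\<^sub>R x) = \<bar>c\<bar> * N x" "N (x + y) \<le> N x + N y" "N x \<ge> 0"
    "N x = 0 \<longleftrightarrow> x = 0" "\<bar>N x - N y\<bar> \<le> N (x - y)"
proof -
  have h: "\<And>c x. N (c *\<^sub>R x) = \<bar>c\<bar> * N x" "\<And>x y. N (x + y) \<le> N x + N y"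
    "\<And>x. N x \<ge> 0" "\<And>x. N x = 0 \<longleftrightarrow> x = 0"
    using assms unfolding is_norm_def by auto
  show m: "N (- x) = N x" using h(1)[of "-1" x] by simp
  show "N (x - y) = N (y - x)" using h(1)[of "-1" "x - y"] by simp
  show "N 0 = 0" using h(4) by simp
  show "N (c *\<^sub>R x) = \<bar>c\<bar> * N x" "N (x + y) \<le> N x + N y" "N x \<ge> 0"
    "N x = 0 \<longleftrightarrow> x = 0" using h by auto
  have a: "N x \<le> N (x - y) + N y" using h(2)[of "x - y" y] by simp
  have b: "N y \<le> N (y - x) + N x" using h(2)[of "y - x" x] by simp
  have "N (y - x) = N (x - y)" using h(1)[of "-1" "x - y"] by simp
  then show "\<bar>N x - N y\<bar> \<le> N (x - y)" using a b by linarith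
qed

lemma nrm_convex:
  fixes N :: "'a::real_normed_vector \<Rightarrow> real"
  assumes "is_norm N"
  shows "convex_on UNIV N"
  unfolding convex_on_def
proof (intro conjI ballI allI impI)
  fix x y and u v :: real assume "0 \<le> u" "0 \<le> v" "u + v = 1"
  have "N (u *\<^sub>R x + v *\<^sub>R y) \<le> N (u *\<^sub>R x) + N (v *\<^sub>R y)" using nrm_basic[OF assms] by blast
  also have "\<dots> = u * N x + v * N y" using nrm_basic(4)[OF assms] \<open>0 \<le> u\<close> \<open>0 \<le> v\<close> by simp
  finally show "N (u *\<^sub>R x + v *\<^sub>R y) \<le> u * N x + v * N y" .
qed simp

lemma nrm_bounds:
  fixes N :: "'a::euclidean_space \<Rightarrow> real"
  assumes "is_norm N"
  shows "\<exists>m C. 0 < m \<and> 0 < C \<and> (\<forall>x. m * norm x \<le> N x \<and> N x \<le> C * norm x)"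
proof -
  have cont: "continuous_on UNIV N"
    using convex_on_continuous[OF open_UNIV nrm_convex[OF assms]] .
  obtain b :: 'a where b: "b \<in> Basis" using nonempty_Basis by blast
  have ne: "sphere (0::'a) 1 \<noteq> {}" using b by (auto simp: dist_norm intro!: exI[of _ b])
  obtain p where p: "p \<in> sphere 0 1" "\<And>y. y \<in> sphere 0 1 \<Longrightarrow> N p \<le> N y"
    using continuous_attains_inf[OF compact_sphere ne continuous_on_subset[OF cont]] by blast
  obtain q where q: "q \<in> sphere 0 1" "\<And>y. y \<in> sphere 0 1 \<Longrightarrow> N y \<le> N q"
    using continuous_attains_sup[OF compact_sphere ne continuous_on_subset[OF cont]] by blast
  have p0: "p \<noteq> 0" using p(1) by auto
  have mpos: "0 < N p" using nrm_basic(6,7)[OF assms, of p] p0 by linarith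
  have key: "N p * norm x \<le> N x \<and> N x \<le> N q * norm x" for x
  proof (cases "x = 0")
    case True then show ?thesis using nrm_basic(3)[OF assms] by simp
  next
    case False
    let ?y = "(1 / norm x) *\<^sub>R x"
    have ys: "?y \<in> sphere 0 1" using False by simp
    have "N x = norm x * N ?y" using nrm_basic(4)[OF assms, of "1/norm x" x] False by simp
    moreover have "N p * norm x \<le> N ?y * norm x" using p(2)[OF ys] by (simp add: mult_right_mono)
    moreover have "N ?y * norm x \<le> N q * norm x" using q(2)[OF ys] by (simp add: mult_right_mono)
    ultimately show ?thesis by (simp add: mult.commute)
  qed
  have "N q * norm x \<le> (N p + N q) * norm x" for x using mpos by (simp add: mult_right_mono)
  then have "0 < N p \<and> 0 < N p + N q \<and> (\<forall>x. N p * norm x \<le> N x \<and> N x \<le> (N p + N q) * norm x)"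
    using key mpos order_trans nrm_basic(6)[OF assms, of q] by (meson add_pos_nonneg)
  then show ?thesis by blast
qed

lemma nrm_metric:
  fixes N :: "'a::real_normed_vector \<Rightarrow> real"
  assumes "is_norm N"
  shows "Metric_space UNIV (\<lambda>x y. N (x - y))"
proof
  fix x y z :: 'a
  show "0 \<le> N (x - y)" using nrm_basic[OF assms] by blast
  show "N (x - y) = N (y - x)" using nrm_basic[OF assms] by blast
  show "(N (x - y) = 0) = (x = y)" using nrm_basic(7)[OF assms] by simp
  show "N (x - z) \<le> N (x - y) + N (y - z)" using nrm_basic(5)[OF assms, of "x - y" "y - z"] by simp
qed

lemma nrm_polish:
  fixes N :: "'a::euclidean_space \<Rightarrow> real"
  assumes "is_norm N"
  shows "polish_metric UNIV (\<lambda>x y. N (x - y))"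
proof -
  interpret M: Metric_space UNIV "\<lambda>x y. N (x - y)" by (rule nrm_metric[OF assms])
  obtain m C where mC: "0 < m" "0 < C" "\<And>x. m * norm x \<le> N x" "\<And>x. N x \<le> C * norm x"
    using nrm_bounds[OF assms] by blast
  have top: "M.mtopology = euclidean"
  proof (rule topology_eq[THEN iffD2], intro allI)
    fix S :: "'a set"
    show "openin M.mtopology S = openin euclidean S"
      unfolding M.openin_mtopology open_openin[symmetric] open_contains_ball
    proof (intro iffI ballI)
      fix x assume "S \<subseteq> UNIV \<and> (\<forall>x. x \<in> S \<longrightarrow> (\<exists>r>0. M.mball x r \<subseteq> S))" "x \<in> S"
      then obtain r where r: "r > 0" "M.mball x r \<subseteq> S" by blast
      show "\<exists>e>0. ball x e \<subseteq> S"
      proof (intro exI[of _ "r / C"] conjI)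
        show "r / C > 0" using r mC by simp
        show "ball x (r / C) \<subseteq> S"
        proof
          fix y assume "y \<in> ball x (r / C)"
          then have "C * norm (x - y) < r" using mC by (simp add: dist_norm field_simps)
          then have "N (x - y) < r" using mC(4)[of "x - y"] by linarith
          then show "y \<in> S" using r by auto
        qed
      qed
    next
      assume H: "\<forall>x\<in>S. \<exists>e>0. ball x e \<subseteq> S"
      show "S \<subseteq> UNIV \<and> (\<forall>x. x \<in> S \<longrightarrow> (\<exists>r>0. M.mball x r \<subseteq> S))"
      proof (intro conjI allI impI)
        fix x assume "x \<in> S"
        then obtain e where e: "e > 0" "ball x e \<subseteq> S" using H by blast
        show "\<exists>r>0. M.mball x r \<subseteq> S"
        proof (intro exI[of _ "m * e"] conjI)
          show "m * e > 0" using e mC by simp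
          show "M.mball x (m * e) \<subseteq> S"
          proof
            fix y assume "y \<in> M.mball x (m * e)"
            then have "m * norm (x - y) < m * e" using mC(3)[of "x - y"] by simp
            then have "norm (x - y) < e" using mC(1) by simp
            then show "y \<in> S" using e by (auto simp: dist_norm)
          qed
        qed
      qed simp
    qed
  qed
  have sep: "separable_space M.mtopology"
    unfolding top separable_space_def
  proof -
    obtain D :: "'a set" where D: "countable D" "\<And>X. open X \<Longrightarrow> X \<noteq> {} \<Longrightarrow> \<exists>d\<in>D. d \<in> X"
      using countable_dense_setE by blast
    have "closure D = UNIV"
    proof -
      have "x \<in> closure D" for x
        unfolding closure_approachable
      proof (intro allI impI)
        fix e :: real assume "e > 0"
        then obtain d where "d \<in> D" "d \<in> ball x e" using D(2)[of "ball x e"] by auto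
        then show "\<exists>y\<in>D. dist y x < e" by (auto simp: dist_commute)
      qed
      then show ?thesis by blast
    qed
    then show "\<exists>C. countable C \<and> C \<subseteq> topspace euclidean \<and> euclidean closure_of C = topspace (euclidean :: 'a topology)"
      using D(1) by (intro exI[of _ D]) simp
  qed
  have comp: "M.mcomplete"
    unfolding M.mcomplete_def
  proof (intro allI impI)
    fix \<sigma> :: "nat \<Rightarrow> 'a" assume "M.MCauchy \<sigma>"
    then have mc: "\<forall>\<epsilon>>0. \<exists>K. \<forall>n n'. K \<le> n \<longrightarrow> K \<le> n' \<longrightarrow> N (\<sigma> n - \<sigma> n') < \<epsilon>"
      unfolding M.MCauchy_def by simp
    have "Cauchy \<sigma>"
      unfolding Cauchy_def
    proof (intro allI impI)
      fix e :: real assume "e > 0"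
      then obtain K where K: "\<forall>n n'. K \<le> n \<longrightarrow> K \<le> n' \<longrightarrow> N (\<sigma> n - \<sigma> n') < m * e"
        using mc mC(1) by (meson mult_pos_pos)
      show "\<exists>M. \<forall>ma\<ge>M. \<forall>n\<ge>M. dist (\<sigma> ma) (\<sigma> n) < e"
      proof (intro exI[of _ K] allI impI)
        fix a b assume "K \<le> a" "K \<le> b"
        then have "m * norm (\<sigma> a - \<sigma> b) < m * e" using K mC(3)[of "\<sigma> a - \<sigma> b"] by force
        then show "dist (\<sigma> a) (\<sigma> b) < e" using mC(1) by (simp add: dist_norm)
      qed
    qed
    then obtain L where L: "\<sigma> \<longlonglongrightarrow> L" using Cauchy_convergent_iff convergent_def by blast
    have "(\<lambda>n. C * norm (\<sigma> n - L)) \<longlonglongrightarrow> 0"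
      using tendsto_mult_right_zero[OF tendsto_norm_zero[OF LIM_zero[OF L]]] by simp
    then have "(\<lambda>n. N (\<sigma> n - L)) \<longlonglongrightarrow> 0"
      by (rule Lim_null_comparison[rotated]) (use mC(4) nrm_basic(6)[OF assms] in auto)
    then show "\<exists>x. limitin M.mtopology \<sigma> x sequentially"
      by (intro exI[of _ L]) (simp add: M.limitin_metric_dist_null)
  qed
  show ?thesis unfolding polish_metric_def using sep comp M.Metric_space_axioms by blast
qed

lemma dquot:
  fixes N :: "'a::real_inner \<Rightarrow> real"
  assumes "(N has_derivative (\<lambda>h. Dv \<bullet> h)) (at u)"
  shows "((\<lambda>t. (N (u + t *\<^sub>R h) - N u) / t) \<longlongrightarrow> Dv \<bullet> h) (at_right 0)"
proof -
  have g: "((\<lambda>t::real. u + t *\<^sub>R h) has_derivative (\<lambda>t. t *\<^sub>R h)) (at 0)"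
    by (auto intro!: derivative_eq_intros)
  have "((N \<circ> (\<lambda>t::real. u + t *\<^sub>R h)) has_derivative ((\<lambda>k. Dv \<bullet> k) \<circ> (\<lambda>t. t *\<^sub>R h))) (at 0)"
    using diff_chain_at[OF g] assms by simp
  then have "((\<lambda>t. N (u + t *\<^sub>R h)) has_derivative (\<lambda>t. (Dv \<bullet> h) * t)) (at 0)"
    by (simp add: o_def inner_scaleR_right mult.commute)
  then have "((\<lambda>t. N (u + t *\<^sub>R h)) has_field_derivative (Dv \<bullet> h)) (at 0)"
    by (simp add: has_field_derivative_def)
  then have "((\<lambda>t. (N (u + t *\<^sub>R h) - N (u + 0 *\<^sub>R h)) / (t - 0)) \<longlongrightarrow> Dv \<bullet> h) (at 0)"
    unfolding has_field_derivative_iff by simp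
  then have "((\<lambda>t. (N (u + t *\<^sub>R h) - N u) / t) \<longlongrightarrow> Dv \<bullet> h) (at 0)" by simp
  then show ?thesis using tendsto_mono at_le by (metis at_within_le_at)
qed

lemma dbound:
  fixes N :: "'a::real_inner \<Rightarrow> real"
  assumes "is_norm N" "(N has_derivative (\<lambda>h. Dv \<bullet> h)) (at u)"
  shows "Dv \<bullet> h \<le> N h"
proof -
  have "\<forall>\<^sub>F t in at_right 0. (N (u + t *\<^sub>R h) - N u) / t \<le> N h"
  proof (rule eventually_at_rightI[of 0 1])
    fix t :: real assume "t \<in> {0<..<1}"
    then have t: "t > 0" by simp
    have "N (u + t *\<^sub>R h) \<le> N u + t * N h" using nrm_basic(5)[OF assms(1), of u "t *\<^sub>R h"] nrm_basic(4)[OF assms(1), of t h] t by simp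
    then show "(N (u + t *\<^sub>R h) - N u) / t \<le> N h" using t by (simp add: divide_le_eq mult.commute)
  qed simp
  then show ?thesis
    using tendsto_le[OF trivial_limit_at_right_real tendsto_const dquot[OF assms(2)]] by blast
qed

lemma dself:
  fixes N :: "'a::real_inner \<Rightarrow> real"
  assumes "is_norm N" "(N has_derivative (\<lambda>h. Dv \<bullet> h)) (at u)"
  shows "Dv \<bullet> u = N u"
proof -
  have "\<forall>\<^sub>F t in at_right 0. (N (u + t *\<^sub>R u) - N u) / t = N u"
  proof (rule eventually_at_rightI[of 0 1])
    fix t :: real assume "t \<in> {0<..<1}"
    then have t: "t > 0" by simp
    have "u + t *\<^sub>R u = (1 + t) *\<^sub>R u" by (simp add: algebra_simps)
    then have "N (u + t *\<^sub>R u) = (1 + t) * N u" using nrm_basic(4)[OF assms(1), of "1 + t" u] t by simp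
    then show "(N (u + t *\<^sub>R u) - N u) / t = N u" using t by (simp add: field_simps)
  qed simp
  then have "((\<lambda>t. (N (u + t *\<^sub>R u) - N u) / t) \<longlongrightarrow> N u) (at_right 0)"
    using tendsto_eventually by (metis (mono_tags, lifting) eventually_mono tendsto_cong tendsto_const)
  then show ?thesis using tendsto_unique[OF trivial_limit_at_right_real dquot[OF assms(2)]] by blast
qed

lemma dkey:
  fixes N :: "'a::real_inner \<Rightarrow> real"
  assumes n: "is_norm N" and sc: "strictly_convex_norm N"
    and d: "(N has_derivative (\<lambda>h. Dv \<bullet> h)) (at u)"
    and "N b = N u" "b \<noteq> u" "u \<noteq> 0"
  shows "Dv \<bullet> b < N b"
proof (rule ccontr)
  assume "\<not> Dv \<bullet> b < N b"
  then have eqb: "Dv \<bullet> b = N b" using dbound[OF n d, of b] by simp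
  have equ: "Dv \<bullet> u = N u" using dself[OF n d] .
  define L where "L = N u"
  have L: "L > 0" using nrm_basic(6,7)[OF n, of u] assms(6) unfolding L_def by linarith
  define a where "a = (1 / L) *\<^sub>R u"
  define b' where "b' = (1 / L) *\<^sub>R b"
  have Na: "N a = 1" unfolding a_def using nrm_basic(4)[OF n, of "1/L" u] L by (simp add: L_def)
  have Nb: "N b' = 1" unfolding b'_def using nrm_basic(4)[OF n, of "1/L" b] L assms(4) by (simp add: L_def)
  have ab: "a \<noteq> b'" unfolding a_def b'_def using L assms(5) by auto
  have lt: "N ((1 - 1/2) *\<^sub>R a + (1/2) *\<^sub>R b') < 1"
    using sc Na Nb ab unfolding strictly_convex_norm_def by (metis field_sum_of_halves half_gt_zero zero_less_one less_add_same_cancel1 one_add_one divide_less_eq_1_pos zero_less_two)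
  have "Dv \<bullet> ((1 - 1/2) *\<^sub>R a + (1/2) *\<^sub>R b') = (1/2) * (Dv \<bullet> u) / L + (1/2) * (Dv \<bullet> b) / L"
    unfolding a_def b'_def by (simp add: inner_add_right inner_scaleR_right)
  also have "\<dots> = 1" using eqb equ assms(4) L by (simp add: L_def field_simps)
  finally have "1 \<le> N ((1 - 1/2) *\<^sub>R a + (1/2) *\<^sub>R b')" using dbound[OF n d] by metis
  then show False using lt by simp
qed

theorem mainTheorem8:
  fixes N :: "real^'n \<Rightarrow> real"
  assumes "is_norm N"
    and "C1_away_from_origin N"
    and "strictly_convex_norm N"
  shows "locally_uniformly_non_branching (UNIV :: (real^'n) set) (\<lambda>x y. N (x - y))"
proof -
  note n = assms(1)
  obtain D :: "real^'n \<Rightarrow> real^'n" where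
    Dd: "\<And>x. x \<noteq> 0 \<Longrightarrow> (N has_derivative (\<lambda>h. D x \<bullet> h)) (at x)"
    and cD: "continuous_on (UNIV - {0}) D"
    using assms(2) unfolding C1_away_from_origin_def by blast
  obtain m C where mC: "0 < m" "0 < C" "\<And>x. m * norm x \<le> N x" "\<And>x. N x \<le> C * norm x"
    using nrm_bounds[OF n] by blast
  have contN: "\<And>a. isCont N a"
    using convex_on_continuous[OF open_UNIV nrm_convex[OF n]] continuous_on_eq_continuous_at[OF open_UNIV] by blast
  have contD: "\<And>a. a \<noteq> 0 \<Longrightarrow> isCont D a"
    using cD continuous_on_eq_continuous_at[of "UNIV - {0}" D] by blast
  have main: "\<exists>r>0. \<exists>\<rho>>0. \<forall>x'\<in>open_mball UNIV (\<lambda>x y. N (x - y)) x r.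
           \<forall>y'\<in>open_mball UNIV (\<lambda>x y. N (x - y)) y r. \<forall>z'\<in>open_mball UNIV (\<lambda>x y. N (x - y)) z r.
         (\<exists>\<gamma>\<in>Geo UNIV (\<lambda>x y. N (x - y)). \<gamma> 0 = x' \<and> \<gamma> 1 = y' \<and>
            Liminf (at_right 0) (\<lambda>t. ereal ((N (\<gamma> t - z') - N (x' - z')) / t))
              \<ge> ereal (- (1 - \<rho>) * N (x' - y')))"
    if yz: "y \<noteq> z" and eq: "N (x - y) = N (x - z)" for x y z :: "real^'n"
  proof -
    define u0 where "u0 = x - z"
    define v0 where "v0 = y - x"
    define L where "L = N u0"
    have u0: "u0 \<noteq> 0"
    proof
      assume "u0 = 0"
      then have "x = z" unfolding u0_def by simp
      then have "x = y" using eq nrm_basic(3,7)[OF n] by (metis eq_iff_diff_eq_0)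
      then show False using yz \<open>x = z\<close> by simp
    qed
    have Lpos: "L > 0" using nrm_basic(6,7)[OF n, of u0] u0 unfolding L_def by linarith
    have "D u0 \<bullet> (x - y) < N (x - y)"
      using dkey[OF n assms(3) Dd[OF u0], of "x - y"] eq yz u0 unfolding u0_def by auto
    moreover have "D u0 \<bullet> v0 = - (D u0 \<bullet> (x - y))" unfolding v0_def
      by (metis inner_minus_right minus_diff_eq)
    moreover have NL: "N v0 = L" unfolding v0_def L_def u0_def using eq nrm_basic(2)[OF n] by metis
    ultimately have cpos: "D u0 \<bullet> v0 + N v0 > 0" using eq NL unfolding L_def u0_def by linarith
    define c where "c = D u0 \<bullet> v0 + N v0"
    define p where "p = (u0, v0)"
    have c1: "isCont (\<lambda>q. D (fst q) \<bullet> snd q + N (snd q)) p"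
    proof -
      have "isCont (\<lambda>q. D (fst q)) p" by (rule isCont_o2[OF isCont_fst[OF continuous_ident]]) (simp add: p_def contD u0)
      moreover have "isCont (\<lambda>q. N (snd q)) p" by (rule isCont_o2[OF isCont_snd[OF continuous_ident]]) (simp add: contN)
      ultimately show ?thesis by (intro continuous_intros) auto
    qed
    have c2: "isCont (\<lambda>q. N (snd q)) p" by (rule isCont_o2[OF isCont_snd[OF continuous_ident]]) (simp add: contN)
    have c3: "isCont (\<lambda>q. N (fst q)) p" by (rule isCont_o2[OF isCont_fst[OF continuous_ident]]) (simp add: contN)
    have ev: "\<forall>\<^sub>F q in at p. c / 2 < D (fst q) \<bullet> snd q + N (snd q) \<and> N (snd q) < 2 * L \<and> 0 < N (fst q)"
    proof (intro eventually_conj)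
      show "\<forall>\<^sub>F q in at p. c / 2 < D (fst q) \<bullet> snd q + N (snd q)"
        by (rule order_tendstoD(1)[OF c1[unfolded isCont_def]]) (use cpos in \<open>simp add: c_def p_def\<close>)
      show "\<forall>\<^sub>F q in at p. N (snd q) < 2 * L"
        by (rule order_tendstoD(2)[OF c2[unfolded isCont_def]]) (use Lpos NL in \<open>simp add: p_def\<close>)
      show "\<forall>\<^sub>F q in at p. 0 < N (fst q)"
        by (rule order_tendstoD(1)[OF c3[unfolded isCont_def]]) (use Lpos in \<open>simp add: p_def L_def\<close>)
    qed
    then obtain \<delta> where \<delta>: "\<delta> > 0" "\<And>q. q \<noteq> p \<Longrightarrow> dist q p < \<delta> \<Longrightarrow>
        c / 2 < D (fst q) \<bullet> snd q + N (snd q) \<and> N (snd q) < 2 * L \<and> 0 < N (fst q)"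
      unfolding eventually_at by auto
    have P: "c / 2 < D (fst q) \<bullet> snd q + N (snd q) \<and> N (snd q) < 2 * L \<and> 0 < N (fst q)"
      if "dist q p < \<delta>" for q
    proof (cases "q = p")
      case True then show ?thesis using cpos Lpos NL by (simp add: p_def c_def L_def)
    next
      case False then show ?thesis using \<delta>(2) that by blast
    qed
    define \<rho> where "\<rho> = c / (4 * L)"
    define r where "r = m * \<delta> / 4"
    have rpos: "r > 0" using mC \<delta> by (simp add: r_def)
    have rhopos: "\<rho> > 0" using cpos Lpos by (simp add: \<rho>_def c_def)
    have close: "norm (a - b) < \<delta> / 4" if "N (a - b) < r" for a b :: "real^'n"
    proof -
      have "m * norm (a - b) < m * (\<delta> / 4)" using mC(3)[of "a - b"] that by (simp add: r_def)
      then show ?thesis using mC(1) by simp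
    qed
    show ?thesis
    proof (rule exI[of _ r], rule conjI[OF rpos], rule exI[of _ \<rho>], rule conjI[OF rhopos], intro ballI)
      fix x' y' z' assume H: "x' \<in> open_mball UNIV (\<lambda>x y. N (x - y)) x r"
        "y' \<in> open_mball UNIV (\<lambda>x y. N (x - y)) y r" "z' \<in> open_mball UNIV (\<lambda>x y. N (x - y)) z r"
      then have hx: "norm (x - x') < \<delta> / 4" and hy: "norm (y - y') < \<delta> / 4" and hz: "norm (z - z') < \<delta> / 4"
        using close by (auto simp: open_mball_def)
      define w where "w = x' - z'"
      define v where "v = y' - x'"
      have dw: "dist w u0 < \<delta> / 2"
      proof -
        have "w - u0 = (x' - x) - (z' - z)" by (simp add: w_def u0_def algebra_simps)
        then have "norm (w - u0) \<le> norm (x - x') + norm (z - z')"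
          by (metis norm_minus_commute norm_triangle_ineq4)
        then show ?thesis using hx hz by (simp add: dist_norm)
      qed
      have dv: "dist v v0 < \<delta> / 2"
      proof -
        have "v - v0 = (y' - y) - (x' - x)" by (simp add: v_def v0_def algebra_simps)
        then have "norm (v - v0) \<le> norm (y - y') + norm (x - x')"
          by (metis norm_minus_commute norm_triangle_ineq4)
        then show ?thesis using hx hy by (simp add: dist_norm)
      qed
      have "dist (w, v) p \<le> dist w u0 + dist v v0"
        unfolding p_def dist_Pair_Pair by (rule sqrt_sum_squares_le_sum) auto
      then have Pw: "c / 2 < D w \<bullet> v + N v \<and> N v < 2 * L \<and> 0 < N w"
        using P[of "(w, v)"] dw dv by simp
      then have w0: "w \<noteq> 0" using nrm_basic(3)[OF n] by auto
      define \<gamma> where "\<gamma> = (\<lambda>t::real. x' + t *\<^sub>R (y' - x'))"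
      have geo: "\<gamma> \<in> Geo UNIV (\<lambda>x y. N (x - y))"
        unfolding Geo_def
      proof (intro CollectI conjI ballI)
        fix s t :: real
        have "\<gamma> s - \<gamma> t = (s - t) *\<^sub>R v" by (simp add: \<gamma>_def v_def algebra_simps)
        moreover have "\<gamma> 0 - \<gamma> 1 = - v" by (simp add: \<gamma>_def v_def)
        ultimately show "N (\<gamma> s - \<gamma> t) = \<bar>t - s\<bar> * N (\<gamma> 0 - \<gamma> 1)"
          using nrm_basic(1,4)[OF n] by (simp add: abs_minus_commute)
      qed simp
      have q: "((\<lambda>t. (N (\<gamma> t - z') - N (x' - z')) / t) \<longlongrightarrow> D w \<bullet> v) (at_right 0)"
      proof -
        have "\<gamma> t - z' = w + t *\<^sub>R v" for t by (simp add: \<gamma>_def w_def v_def algebra_simps)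
        then have e: "(\<lambda>t. (N (\<gamma> t - z') - N (x' - z')) / t) = (\<lambda>t. (N (w + t *\<^sub>R v) - N w) / t)"
          by (metis w_def)
        show ?thesis unfolding e by (rule dquot[OF Dd[OF w0]])
      qed
      have lim: "Liminf (at_right 0) (\<lambda>t. ereal ((N (\<gamma> t - z') - N (x' - z')) / t)) = ereal (D w \<bullet> v)"
        by (rule lim_imp_Liminf[OF trivial_limit_at_right_real]) (use q in \<open>rule tendsto_ereal\<close>)
      have Nv: "N (x' - y') = N v" unfolding v_def using nrm_basic(2)[OF n] by metis
      have "\<rho> * N v \<le> \<rho> * (2 * L)" using Pw rhopos by (intro mult_left_mono) auto
      also have "\<rho> * (2 * L) = c / 2" using Lpos by (simp add: \<rho>_def)
      finally have "- (1 - \<rho>) * N (x' - y') \<le> D w \<bullet> v" using Pw Nv by (simp add: algebra_simps)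
      then show "\<exists>\<gamma>\<in>Geo UNIV (\<lambda>x y. N (x - y)). \<gamma> 0 = x' \<and> \<gamma> 1 = y' \<and>
            Liminf (at_right 0) (\<lambda>t. ereal ((N (\<gamma> t - z') - N (x' - z')) / t))
              \<ge> ereal (- (1 - \<rho>) * N (x' - y'))"
        using geo lim by (intro bexI[of _ \<gamma>]) (auto simp: \<gamma>_def)
    qed
  qed
  show ?thesis
    unfolding locally_uniformly_non_branching_def
    using nrm_polish[OF n] main by blast
qed

end
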